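(* Let $L\ge1$, $\delta>0$, $\lambda^0=(\lambda^0_1,\dots,\lambda^0_L)\in(0,\infty)^L$, and let $c_1,\dots,c_L:[0,\infty)\to\mathbb{R}$ be continuous and strictly increasing. For $m\in\mathbb{N}$ put $\lambda^m_i=m\lambda^0_i$ and, for $\beta=(\beta_1,\dots,\beta_L)\in[0,\infty)^L$, $$f_m(\beta)=\sum_{i=1}^L c_i(\beta_i)+\delta\Big(1-\prod_{i=1}^L\big(1-\tilde\alpha(\beta_i,\lambda^m_i)\big)\Big),\qquad g_m(\beta)=\sum_{i=1}^L c_i(\beta_i)+\delta\Big(1-\prod_{i=1}^L\big(1-UB(\beta_i,\lambda^m_i)\big)\Big).$$ Then $\displaystyle\lim_{m\to\infty}\sup_{\beta\ge0}\big(g_m(\beta)-f_m(\beta)\big)=0.$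
   Context: $\phi,\Phi$ are the standard normal density and distribution function. For $\lambda>0$ and real $n\ge 0$, $\bar\alpha(n,\lambda)=\min\Big\{1,\big[\lambda\int_0^\infty t e^{-\lambda t}(1+t)^{n-1}\,dt\big]^{-1}\Big\}$ is the continuous Erlang-C function, and $\tilde\alpha(\beta,\lambda)=\bar\alpha(\lambda+\beta\sqrt\lambda,\lambda)$. For $\lambda>0,\beta\ge 0$ set $n=\lambda+\beta\sqrt{\lambda}$, $\rho=\lambda/n$, $a=\sqrt{-2n(1-\rho+\ln\rho)}$, $\gamma=(n-\lambda)/\sqrt{n}$, and $UB(\beta,\lambda)=\left[\rho+\gamma\left(\frac{\Phi(a)}{\phi(a)}+\frac{2}{3\sqrt{n}}\right)\right]^{-1}$ (so $UB(0,\lambda)=1$). It is known (Janssen, van Leeuwaarden and Zwart) that $\tilde\alpha(\beta,\lambda)\le UB(\beta,\lambda)$ for all $\lambda,\beta>0$. *)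

theory Defs
  imports "HOL-Analysis.Analysis"
begin

definition std_phi :: "real \<Rightarrow> real" where
  "std_phi x = exp (- (x^2) / 2) / sqrt (2 * pi)"

definition std_Phi :: "real \<Rightarrow> real" where
  "std_Phi x = (LBINT t:{..x}. std_phi t)"

definition erlangC_cont :: "real \<Rightarrow> real \<Rightarrow> real" where
  "erlangC_cont n lam =
     min 1 (inverse (lam * (LBINT t:{0..}. t * exp (- lam * t) * (1 + t) powr (n - 1))))"

definition alpha_tilde :: "real \<Rightarrow> real \<Rightarrow> real" where
  "alpha_tilde \<beta> lam = erlangC_cont (lam + \<beta> * sqrt lam) lam"

text \<open>Upper bound UB(beta, lambda) of Janssen, van Leeuwaarden and Zwart.\<close>
definition UB :: "real \<Rightarrow> real \<Rightarrow> real" where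
  "UB \<beta> lam =
    (let n = lam + \<beta> * sqrt lam;
         \<rho> = lam / n;
         a = sqrt (- 2 * n * (1 - \<rho> + ln \<rho>));
         \<gamma> = (n - lam) / sqrt n
     in inverse (\<rho> + \<gamma> * (std_Phi a / std_phi a + 2 / (3 * sqrt n))))"

end

theory Submission
  imports Defs
begin


lemma ln_lower2:
  fixes x :: real assumes "x \<ge> 0" shows "x - x^2/2 \<le> ln (1+x)"
proof -
  have "(\<lambda>x. ln (1+x) - x + x^2/2) 0 \<le> (\<lambda>x. ln (1+x) - x + x^2/2) x"
  proof (rule deriv_nonneg_imp_mono[where g="\<lambda>x. ln (1+x) - x + x^2/2" and g'="\<lambda>x. 1/(1+x) - 1 + x"])
    fix y assume y: "y \<in> {0..x}"
    show "((\<lambda>x. ln (1+x) - x + x^2/2) has_real_derivative 1/(1+y) - 1 + y) (at y)"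
      using y by (auto intro!: derivative_eq_intros simp: field_simps power2_eq_square)
    have "1/(1+y) - 1 + y = y^2/(1+y)" using y by (simp add: field_simps power2_eq_square)
    then show "0 \<le> 1/(1+y) - 1 + y" using y by simp
  qed (use assms in auto)
  then show ?thesis by simp
qed

lemma ln_upper3:
  fixes x :: real assumes "x \<ge> 0" shows "ln (1+x) \<le> x - x^2/2 + x^3/3"
proof -
  have "(\<lambda>x. x - x^2/2 + x^3/3 - ln (1+x)) 0 \<le> (\<lambda>x. x - x^2/2 + x^3/3 - ln (1+x)) x"
  proof (rule deriv_nonneg_imp_mono[where g="\<lambda>x. x - x^2/2 + x^3/3 - ln (1+x)" and g'="\<lambda>x. 1 - x + x^2 - 1/(1+x)"])
    fix y assume y: "y \<in> {0..x}"
    show "((\<lambda>x. x - x^2/2 + x^3/3 - ln (1+x)) has_real_derivative 1 - y + y^2 - 1/(1+y)) (at y)"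
      using y by (auto intro!: derivative_eq_intros simp: field_simps power2_eq_square power3_eq_cube)
    have "1 - y + y^2 - 1/(1+y) = y^3/(1+y)" using y by (simp add: field_simps power2_eq_square power3_eq_cube)
    then show "0 \<le> 1 - y + y^2 - 1/(1+y)" using y by simp
  qed (use assms in auto)
  then show ?thesis by simp
qed

lemma ln_upper_frac:
  fixes x :: real assumes "x \<ge> 0" shows "ln (1+x) \<le> x - x^2/(2*(1+x))"
proof -
  have "(\<lambda>x. x - x^2/(2*(1+x)) - ln (1+x)) 0 \<le> (\<lambda>x. x - x^2/(2*(1+x)) - ln (1+x)) x"
  proof (rule deriv_nonneg_imp_mono[where g="\<lambda>x. x - x^2/(2*(1+x)) - ln (1+x)" and g'="\<lambda>x. x^2/(2*(1+x)^2)"])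
    fix y assume y: "y \<in> {0..x}"
    show "((\<lambda>x. x - x^2/(2*(1+x)) - ln (1+x)) has_real_derivative y^2/(2*(1+y)^2)) (at y)"
      using y apply (auto intro!: derivative_eq_intros)
      apply (simp add: divide_simps)
      by (simp add: algebra_simps power2_eq_square)
    show "0 \<le> y^2/(2*(1+y)^2)" by simp
  qed (use assms in auto)
  then show ?thesis by simp
qed

lemma ln_rho:
  fixes r :: real assumes "0 < r" "r \<le> 1" shows "(1-r) + (1-r)^2/2 \<le> - ln r"
proof -
  have "(\<lambda>r. - ln r - (1-r) - (1-r)^2/2) 1 \<le> (\<lambda>r. - ln r - (1-r) - (1-r)^2/2) r"
  proof (rule deriv_nonpos_imp_antimono[where g="\<lambda>r. - ln r - (1-r) - (1-r)^2/2" and g'="\<lambda>r. -((1-r)^2/r)"])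
    fix y assume y: "y \<in> {r..1}"
    show "((\<lambda>r. - ln r - (1-r) - (1-r)^2/2) has_real_derivative -((1-y)^2/y)) (at y)"
      using y assms by (auto intro!: derivative_eq_intros simp: field_simps power2_eq_square)
    show "-((1-y)^2/y) \<le> 0" using y assms by simp
  qed (use assms in auto)
  then show ?thesis by simp
qed



lemma exp_minus_set_integrable:
  fixes a c :: real assumes "a > 0"
  shows "set_integrable lborel {c..} (\<lambda>x. exp (-a*x))"
proof -
  have "(\<lambda>x. exp (-a*x)) absolutely_integrable_on {c..}"
    by (rule nonnegative_absolutely_integrable_1[OF integrable_on_exp_minus_to_infinity[OF assms]]) auto
  then show ?thesis
    unfolding set_integrable_def
    by (subst (asm) integrable_completion) (auto intro!: borel_measurable_continuous_on_indicator continuous_intros)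
qed

lemma f_bound:
  fixes lam n t :: real assumes "lam > 0" "n \<ge> 0" "t \<ge> 0"
  shows "exp (-lam*t) * (1+t) powr n \<le> exp (lam/2 - (n+1)*(1 + ln (lam/(2*(n+1))))) * exp (-(lam/2)*t)"
proof -
  define k where "k = lam/(2*(n+1))"
  have k: "k > 0" using assms by (simp add: k_def)
  have "ln (k*(1+t)) \<le> k*(1+t) - 1" using k assms by (intro ln_le_minus_one) auto
  then have l: "ln (1+t) \<le> k*(1+t) - 1 - ln k" using k assms by (simp add: ln_mult)
  have l0: "ln (1+t) \<ge> 0" using assms by simp
  have "n * ln (1+t) \<le> (n+1) * ln (1+t)" using l0 by (simp add: algebra_simps)
  also have "\<dots> \<le> (n+1) * (k*(1+t) - 1 - ln k)" using l assms by (intro mult_left_mono) auto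
  also have "\<dots> = lam/2*(1+t) - (n+1)*(1 + ln k)" using assms by (simp add: k_def field_simps)
  finally have *: "n * ln (1+t) \<le> lam/2*(1+t) - (n+1)*(1 + ln k)" .
  have "exp (-lam*t) * (1+t) powr n = exp (-lam*t + n * ln (1+t))"
    using assms by (simp add: powr_def exp_add[symmetric])
  also have "\<dots> \<le> exp (-lam*t + lam/2*(1+t) - (n+1)*(1 + ln k))" using * by simp
  also have "\<dots> = exp (lam/2 - (n+1)*(1 + ln k)) * exp (-(lam/2)*t)"
    by (simp add: exp_add[symmetric] field_simps)
  finally show ?thesis by (simp add: k_def)
qed

lemma f_integrable:
  fixes lam n :: real assumes "lam > 0" "n \<ge> 0"
  shows "set_integrable lborel {0..} (\<lambda>t. exp (-lam*t) * (1+t) powr n)"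
proof (rule set_integrable_bound[where f="\<lambda>t. exp (lam/2 - (n+1)*(1 + ln (lam/(2*(n+1))))) * exp (-(lam/2)*t)"])
  show "set_integrable lborel {0..} (\<lambda>t. exp (lam/2 - (n+1)*(1 + ln (lam/(2*(n+1))))) * exp (-(lam/2)*t))"
    using exp_minus_set_integrable[of "lam/2" 0] assms by simp
  show "set_borel_measurable lborel {0..} (\<lambda>t. exp (-lam*t) * (1+t) powr n)"
    unfolding set_borel_measurable_def
    by (auto intro!: borel_measurable_continuous_on_indicator continuous_intros)
  show "AE x in lborel. x \<in> {0..} \<longrightarrow> norm (exp (-lam*x) * (1+x) powr n) \<le>
     norm (exp (lam/2 - (n+1)*(1 + ln (lam/(2*(n+1))))) * exp (-(lam/2)*x))"
    using f_bound[OF assms] by auto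
qed



lemma erlang_identity:
  fixes lam n :: real assumes lam: "lam > 0" and nl: "n \<ge> lam"
  shows "lam * (LBINT t:{0..}. t * exp (- lam * t) * (1 + t) powr (n - 1))
       = lam/n + lam*(1 - lam/n) * (LBINT t:{0..}. exp (-lam*t) * (1+t) powr n)"
proof -
  have n0: "n > 0" using lam nl by simp
  define \<rho> where "\<rho> = lam/n"
  define f where "f t = exp (-lam*t) * (1+t) powr n" for t
  define w where "w t = t * exp (- lam * t) * (1 + t) powr (n - 1)" for t
  define H where "H t = lam*(1-\<rho>) * f t - lam * w t" for t
  have fint: "set_integrable lborel {0..} f"
    unfolding f_def using f_integrable[of lam n] lam n0 by simp
  have pw: "(1+t) powr n = (1+t) * (1+t) powr (n-1)" if "t \<ge> 0" for t :: real
    using that by (simp add: powr_mult_base)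
  have wint: "set_integrable lborel {0..} w"
  proof (rule set_integrable_bound[OF fint])
    show "set_borel_measurable lborel {0..} w"
      unfolding set_borel_measurable_def w_def
      by (auto intro!: borel_measurable_continuous_on_indicator continuous_intros)
    show "AE x in lborel. x \<in> {0..} \<longrightarrow> norm (w x) \<le> norm (f x)"
    proof (rule AE_I2, rule impI)
      fix x :: real assume x: "x \<in> {0..}"
      have "x * ((1+x) powr (n-1)) \<le> (1+x) * (1+x) powr (n-1)"
        using x by (intro mult_right_mono) auto
      then have "exp (-lam*x) * (x * ((1+x) powr (n-1))) \<le> exp (-lam*x) * ((1+x) * (1+x) powr (n-1))"
        by (intro mult_left_mono) auto
      then show "norm (w x) \<le> norm (f x)" using x
        unfolding w_def f_def by (simp add: pw mult_ac abs_mult)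
    qed
  qed
  have Hint: "set_integrable lborel {0..} H"
    unfolding H_def using fint wint by (intro set_integral_diff set_integrable_mult_right) auto
  have Hder: "((\<lambda>t. \<rho> * f t) has_real_derivative H t) (at t)" if "t \<ge> 0" for t
  proof -
    have "((\<lambda>t. \<rho> * f t) has_real_derivative
           \<rho> * (-lam * exp (-lam*t) * (1+t) powr n + exp (-lam*t) * (n * (1+t) powr (n-1))))  (at t)"
      unfolding f_def using that by (auto intro!: derivative_eq_intros)
    moreover have "\<rho> * (-lam * exp (-lam*t) * (1+t) powr n + exp (-lam*t) * (n * (1+t) powr (n-1))) = H t"
      unfolding H_def f_def w_def \<rho>_def using that n0 by (simp add: pw field_simps)
    ultimately show ?thesis by simp
  qed
  have Hcont: "continuous_on {0..b} H" for b
    unfolding H_def f_def w_def by (auto intro!: continuous_intros)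
  have FTC: "(LBINT t:{0..b}. H t) = \<rho> * f b - \<rho> * f 0" if "b \<ge> 0" for b
    unfolding set_lebesgue_integral_def
  proof (rule integral_FTC_atLeastAtMost[OF that _ Hcont])
    fix x assume "0 \<le> x" "x \<le> b"
    then show "((\<lambda>t. \<rho> * f t) has_vector_derivative H x) (at x within {0..b})"
      using Hder by (auto simp: has_real_derivative_iff_has_vector_derivative[symmetric] intro: has_field_derivative_at_within)
  qed
  have lim1: "((\<lambda>b. LBINT t:{0..b}. H t) \<longlongrightarrow> (LBINT t:{0..}. H t)) at_top"
    by (rule tendsto_set_lebesgue_integral_at_top[OF _ Hint]) auto
  define C where "C = exp (lam/2 - (n+1)*(1 + ln (lam/(2*(n+1)))))"
  have fb: "f b \<le> C * exp (-(lam/2)*b)" if "b \<ge> 0" for b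
    unfolding f_def C_def using f_bound[of lam n b] lam n0 that by simp
  have hlim: "((\<lambda>b. C * exp (-(lam/2)*b)) \<longlongrightarrow> 0) at_top"
    using lam by real_asymp
  have flim: "(f \<longlongrightarrow> 0) at_top"
  proof (rule tendsto_sandwich[where f="\<lambda>_. 0" and h="\<lambda>b. C * exp (-(lam/2)*b)"])
    show "\<forall>\<^sub>F b in at_top. 0 \<le> f b"
      unfolding f_def by (intro always_eventually allI) simp
    show "\<forall>\<^sub>F b in at_top. f b \<le> C * exp (-(lam/2)*b)"
      using fb unfolding eventually_at_top_linorder by blast
  qed (use hlim in simp_all)
  have l2: "((\<lambda>b. \<rho> * f b - \<rho> * f 0) \<longlongrightarrow> \<rho> * 0 - \<rho> * f 0) at_top"
    by (intro tendsto_intros flim)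
  have ev: "\<forall>\<^sub>F b in at_top. (LBINT t:{0..b}. H t) = \<rho> * f b - \<rho> * f 0"
    using FTC by (auto simp: eventually_at_top_linorder intro!: exI[of _ 0])
  have l3: "((\<lambda>b. LBINT t:{0..b}. H t) \<longlongrightarrow> \<rho> * 0 - \<rho> * f 0) at_top"
    using tendsto_cong[OF ev] l2 by simp
  have "(LBINT t:{0..}. H t) = \<rho> * 0 - \<rho> * f 0"
    by (rule tendsto_unique[OF trivial_limit_at_top_linorder lim1 l3])
  then have "(LBINT t:{0..}. H t) = - \<rho>" by (simp add: f_def)
  moreover have "(LBINT t:{0..}. H t) = lam*(1-\<rho>) * (LBINT t:{0..}. f t) - lam * (LBINT t:{0..}. w t)"
    unfolding H_def using fint wint by (subst set_integral_diff) auto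
  ultimately show ?thesis unfolding \<rho>_def f_def w_def by (simp add: algebra_simps)
qed



lemma set_integral_scale:
  fixes f :: "real \<Rightarrow> real" and c :: real assumes c: "c > 0"
  shows "(LBINT t:{0..}. f t) = c * (LBINT u:{0..}. f (c*u))"
proof -
  have "(LBINT t:{0..}. f t) = \<bar>c\<bar> *\<^sub>R (\<integral>u. indicator {0..} (0 + c*u) *\<^sub>R f (0 + c*u) \<partial>lborel)"
    unfolding set_lebesgue_integral_def by (rule lborel_integral_real_affine) (use c in simp)
  also have "(\<lambda>u. indicator {0..} (0 + c*u) *\<^sub>R f (0 + c*u)) = (\<lambda>u. indicator {0..} u *\<^sub>R f (c*u))"
    using c by (auto simp: indicator_def zero_le_mult_iff fun_eq_iff)
  finally show ?thesis using c by (simp add: set_lebesgue_integral_def)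
qed

lemma set_integrable_scale:
  fixes f :: "real \<Rightarrow> real" and c :: real assumes c: "c > 0"
    and f: "set_integrable lborel {0..} f"
  shows "set_integrable lborel {0..} (\<lambda>u. f (c*u))"
proof -
  have "integrable lborel (\<lambda>u. indicator {0..} (0 + c*u) *\<^sub>R f (0 + c*u))"
    using f c unfolding set_integrable_def by (intro lborel_integrable_real_affine) auto
  also have "(\<lambda>u. indicator {0..} (0 + c*u) *\<^sub>R f (0 + c*u)) = (\<lambda>u. indicator {0..} u *\<^sub>R f (c*u))"
    using c by (auto simp: indicator_def zero_le_mult_iff fun_eq_iff)
  finally show ?thesis unfolding set_integrable_def .
qed

lemma Phi_ratio:
  "std_Phi a = std_phi a * (LBINT u:{0..}. exp (a*u - u^2/2))"
proof -
  have "std_Phi a = \<bar>-1\<bar> *\<^sub>R (\<integral>u. indicator {..a} (a + (-1)*u) *\<^sub>R std_phi (a + (-1)*u) \<partial>lborel)"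
    unfolding std_Phi_def set_lebesgue_integral_def by (rule lborel_integral_real_affine) simp
  also have "(\<lambda>u. indicator {..a} (a + (-1)*u) *\<^sub>R std_phi (a + (-1)*u)) =
             (\<lambda>u. std_phi a * (indicator {0..} u *\<^sub>R exp (a*u - u^2/2)))"
  proof
    fix u :: real
    have "std_phi (a - u) = std_phi a * exp (a*u - u^2/2)"
      unfolding std_phi_def by (simp add: exp_add[symmetric] power2_eq_square field_simps)
    then show "indicator {..a} (a + (-1)*u) *\<^sub>R std_phi (a + (-1)*u) = std_phi a * (indicator {0..} u *\<^sub>R exp (a*u - u^2/2))"
      by (auto simp: indicator_def)
  qed
  finally show ?thesis by (simp add: set_lebesgue_integral_def)
qed



definition Gf :: "real \<Rightarrow> real" where "Gf a = (LBINT u:{0..}. exp (a*u - u^2/2))"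
definition hf :: "real \<Rightarrow> real \<Rightarrow> real" where "hf n u = (1 + u / sqrt n) powr n * exp (- sqrt n * u)"

lemma G_integrable: fixes a :: real shows "set_integrable lborel {0..} (\<lambda>u. exp (a*u - u^2/2))"
proof (rule set_integrable_bound[where f="\<lambda>u. exp ((a+1)^2/2) * exp (-1*u)"])
  show "set_integrable lborel {0..} (\<lambda>u. exp ((a+1)^2/2) * exp (-1*u))"
    using exp_minus_set_integrable[of 1 0] by simp
  show "set_borel_measurable lborel {0..} (\<lambda>u. exp (a*u - u^2/2))"
    unfolding set_borel_measurable_def
    by (auto intro!: borel_measurable_continuous_on_indicator continuous_intros)
  show "AE x in lborel. x \<in> {0..} \<longrightarrow> norm (exp (a*x - x^2/2)) \<le> norm (exp ((a+1)^2/2) * exp (-1*x))"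
  proof (rule AE_I2, rule impI)
    fix x :: real
    have "a*x - x^2/2 \<le> (a+1)^2/2 + (-1*x)"
      using sum_squares_ge_zero[of "x - (a+1)" 0] by (simp add: power2_eq_square algebra_simps)
    then show "norm (exp (a*x - x^2/2)) \<le> norm (exp ((a+1)^2/2) * exp (-1*x))"
      by (simp add: exp_add[symmetric])
  qed
qed

lemma G_mono: fixes a b :: real assumes "a \<le> b" shows "Gf a \<le> Gf b"
  unfolding Gf_def
  by (rule set_integral_mono[OF G_integrable G_integrable]) (use assms in \<open>auto intro!: mult_right_mono\<close>)

lemma G_ge: fixes a :: real assumes "0 \<le> a" shows "exp (-1/2) \<le> Gf a"
proof -
  have int1: "set_integrable lborel {0..} (\<lambda>u::real. indicator {0..1} u * exp (-1/2::real))"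
  proof -
    have i0: "integrable lborel (\<lambda>u. indicator {0..1::real} u * exp (-1/2::real))"
      by (simp add: integrable_real_indicator)
    have eq: "(\<lambda>u. indicator {0..} u *\<^sub>R (indicator {0..1::real} u * exp (-1/2::real))) = (\<lambda>u. indicator {0..1} u * exp (-1/2))"
      by (auto simp: indicator_def fun_eq_iff)
    show ?thesis unfolding set_integrable_def
      by (rule integrable_mult_indicator[OF _ i0]) auto
  qed
  have eqv: "(LBINT u::real:{0..}. indicator {0..1} u * exp (-1/2::real)) = exp (-1/2)"
  proof -
    have "(LBINT u::real:{0..}. indicator {0..1} u * exp (-1/2::real)) = (\<integral>u. indicator {0..1::real} u * exp (-1/2::real) \<partial>lborel)"
      unfolding set_lebesgue_integral_def by (rule Bochner_Integration.integral_cong[OF refl]) (auto simp: indicator_def)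
    also have "\<dots> = exp (-1/2)" by simp
    finally show ?thesis .
  qed
  have "exp (-1/2) = (LBINT u::real:{0..}. indicator {0..1} u * exp (-1/2::real))" using eqv by simp
  also have "\<dots> \<le> Gf 0"
    unfolding Gf_def
  proof (rule set_integral_mono[OF int1 G_integrable])
    fix u :: real assume u: "u \<in> {0..}"
    show "indicator {0..1} u * exp (-1/2) \<le> exp (0*u - u^2/2)"
    proof (cases "u \<le> 1")
      case True
      then have "u^2 \<le> 1" using u by (simp add: power_le_one)
      then show ?thesis using True u by (simp add: indicator_def)
    qed (simp add: indicator_def)
  qed
  also have "\<dots> \<le> Gf a" using G_mono assms by simp
  finally show ?thesis .
qed

lemma hf_eq: assumes "n > 0" "u \<ge> 0" shows "hf n u = exp (n * ln (1 + u / sqrt n) - sqrt n * u)"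
proof -
  have "sqrt n > 0" using assms by simp
  then have "u + sqrt n > 0" using assms by linarith
  then show ?thesis using assms by (simp add: hf_def powr_def exp_diff exp_minus field_simps)
qed

lemma hf_bounds:
  assumes n: "n > 0" and u: "u \<ge> 0"
  shows "exp (-(u^2)/2) \<le> hf n u" "hf n u \<le> exp (-(u^2)/2 + u^3/(3 * sqrt n))"
    "hf n u \<le> exp (-(u^2)/(2*(1 + u / sqrt n)))"
proof -
  define s where "s = sqrt n"
  have s: "s > 0" "n = s^2" using n by (auto simp: s_def)
  define x where "x = u / s"
  have x: "x \<ge> 0" using u s by (simp add: x_def)
  have e: "hf n u = exp (n * ln (1 + x) - s * u)" using hf_eq[OF n u] by (simp add: s_def x_def)
  have nx: "n * x = s * u" "n * x^2 = u^2" "n * x^3 = u^3 / s"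
    using s by (simp_all add: x_def power2_eq_square power3_eq_cube field_simps)
  have "n * (x - x^2/2) \<le> n * ln (1+x)" using ln_lower2[OF x] n by (intro mult_left_mono) auto
  then have "-(u^2)/2 \<le> n * ln (1 + x) - s * u" using nx by (simp add: algebra_simps)
  then show "exp (-(u^2)/2) \<le> hf n u" unfolding e by simp
  have "n * ln (1+x) \<le> n * (x - x^2/2 + x^3/3)" using ln_upper3[OF x] n by (intro mult_left_mono) auto
  then have "n * ln (1 + x) - s * u \<le> -(u^2)/2 + u^3/(3 * s)" using nx by (simp add: algebra_simps)
  then show "hf n u \<le> exp (-(u^2)/2 + u^3/(3 * sqrt n))" unfolding e s_def by simp
  have "n * ln (1+x) \<le> n * (x - x^2/(2*(1+x)))" using ln_upper_frac[OF x] n by (intro mult_left_mono) auto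
  also have "n * (x - x^2/(2*(1+x))) = s * u - u^2/(2*(1+x))"
    using nx x by (simp add: right_diff_distrib)
  finally have "n * ln (1 + x) - s * u \<le> -(u^2)/(2*(1 + x))" by simp
  then show "hf n u \<le> exp (-(u^2)/(2*(1 + u / sqrt n)))" unfolding e x_def s_def by simp
qed



lemma dom_bound:
  fixes \<Gamma> n u :: real
  assumes G: "\<Gamma> \<ge> 0" and n: "n \<ge> (4*\<Gamma>+4)^2" and u: "u \<ge> 0"
  shows "exp (\<Gamma>*u) * hf n u \<le> exp ((\<Gamma>+1)*(4*\<Gamma>+4)) * exp (-1*u)"
proof -
  define s where "s = 4*\<Gamma>+4"
  have s: "s > 0" using G by (simp add: s_def)
  define r where "r = sqrt n"
  have rs: "r \<ge> s" unfolding r_def using n s real_le_rsqrt by (simp add: s_def)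
  have n0: "n > 0" using n s by (smt (verit) s_def zero_less_power)
  have r0: "r > 0" using rs s by simp
  have eq: "u^2/(2*(1 + u / sqrt n)) = u^2 * r / (2*(r+u))"
    using r0 u by (simp add: r_def[symmetric] field_simps)
  have key: "\<Gamma>*u - u^2 * r / (2*(r+u)) \<le> (\<Gamma>+1) * s + (-1*u)"
  proof (cases "u \<ge> s")
    case True
    have "r * s \<le> r*u" using True r0 by (intro mult_left_mono) auto
    moreover have "s*u \<le> r*u" using rs u by (intro mult_right_mono) auto
    ultimately have "s * (r+u) \<le> 2*u*r" by (simp add: algebra_simps)
    then have "s * u * (r+u) \<le> 2*u*r*u" using u by (metis mult.commute mult.left_commute mult_right_mono)
    then have "s * u/4 \<le> u^2 * r / (2*(r+u))" using r0 u by (simp add: field_simps power2_eq_square)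
    moreover have "s * u/4 = (\<Gamma>+1)*u" by (simp add: s_def algebra_simps)
    moreover have "0 \<le> \<Gamma> * s" using G s by simp
    moreover have "(\<Gamma>+1) * s = \<Gamma> * s + s" "(\<Gamma>+1)*u = \<Gamma>*u + u" by (simp_all add: algebra_simps)
    ultimately show ?thesis using s u by linarith
  next
    case False
    have "0 \<le> u^2 * r / (2*(r+u))" using r0 u by simp
    moreover have "\<Gamma>*u \<le> \<Gamma> * s" using False G by (intro mult_left_mono) auto
    ultimately show ?thesis using False by (simp add: algebra_simps)
  qed
  have "exp (\<Gamma>*u) * hf n u \<le> exp (\<Gamma>*u) * exp (-(u^2)/(2*(1 + u / sqrt n)))"
    using hf_bounds(3)[OF n0 u] by simp
  also have "\<dots> = exp (\<Gamma>*u) * exp (-(u^2 * r / (2*(r+u))))"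
    using eq by (metis minus_divide_left)
  also have "\<dots> = exp (\<Gamma>*u - u^2 * r / (2*(r+u)))"
    by (simp add: exp_diff exp_minus divide_inverse)
  also have "\<dots> \<le> exp ((\<Gamma>+1) * s + (-1*u))" using key by simp
  finally show ?thesis by (simp add: s_def exp_diff exp_minus divide_inverse)
qed

lemma hf_meas: "hf n \<in> borel_measurable borel"
  unfolding hf_def by measurable

lemma hf_lim: assumes u: "u \<ge> 0" shows "((\<lambda>n. hf n u) \<longlongrightarrow> exp (-(u^2)/2)) at_top"
proof (rule tendsto_sandwich[where f="\<lambda>_. exp (-(u^2)/2)" and h="\<lambda>t. exp (-(u^2)/2 + u^3/(3 * sqrt t))"])
  show "\<forall>\<^sub>F n in at_top. exp (-(u^2)/2) \<le> hf n u"
    by (rule eventually_mono[OF eventually_gt_at_top[of 0]]) (rule hf_bounds(1)[OF _ u])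
  show "\<forall>\<^sub>F n in at_top. hf n u \<le> exp (-(u^2)/2 + u^3/(3 * sqrt n))"
    by (rule eventually_mono[OF eventually_gt_at_top[of 0]]) (rule hf_bounds(2)[OF _ u])
  show "((\<lambda>t. exp (-(u^2)/2 + u^3/(3 * sqrt t))) \<longlongrightarrow> exp (-(u^2)/2)) at_top"
    by real_asymp
qed simp

lemma E_lim:
  fixes \<Gamma> :: real assumes G: "\<Gamma> \<ge> 0"
  shows "((\<lambda>n. LBINT u:{0..}. exp (\<Gamma>*u) * (hf n u - exp (-(u^2)/2))) \<longlongrightarrow> 0) at_top"
proof -
  define C where "C = exp ((\<Gamma>+1)*(4*\<Gamma>+4))"
  have "((\<lambda>n. integral\<^sup>L lborel (\<lambda>u. indicator {0..} u *\<^sub>R (exp (\<Gamma>*u) * (hf n u - exp (-(u^2)/2)))))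
        \<longlongrightarrow> integral\<^sup>L lborel (\<lambda>u::real. 0::real)) at_top"
  proof (rule integral_dominated_convergence_at_top[where w="\<lambda>u. indicator {0..} u *\<^sub>R (C * exp (-1*u))"
     and s="\<lambda>n u. indicator {0..} u *\<^sub>R (exp (\<Gamma>*u) * (hf n u - exp (-(u^2)/2)))" and f="\<lambda>u. 0"])
    show "(\<lambda>u::real. 0::real) \<in> borel_measurable lborel" by simp
    show "(\<lambda>u. indicator {0..} u *\<^sub>R (exp (\<Gamma>*u) * (hf n u - exp (-(u^2)/2)))) \<in> borel_measurable lborel" for n
      using hf_meas[of n] by measurable
    show "integrable lborel (\<lambda>u. indicator {0..} u *\<^sub>R (C * exp (-1*u)))"
      using integrable_mult_left[OF exp_minus_set_integrable[of 1 0, unfolded set_integrable_def], of C]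
      by (simp add: mult_ac)
    show "AE x in lborel. ((\<lambda>n. indicator {0..} x *\<^sub>R (exp (\<Gamma>*x) * (hf n x - exp (-(x^2)/2)))) \<longlongrightarrow> 0) at_top"
    proof (rule AE_I2)
      fix x :: real
      show "((\<lambda>n. indicator {0..} x *\<^sub>R (exp (\<Gamma>*x) * (hf n x - exp (-(x^2)/2)))) \<longlongrightarrow> 0) at_top"
      proof (cases "x \<ge> 0")
        case True
        have "((\<lambda>n. indicator {0..} x *\<^sub>R (exp (\<Gamma>*x) * (hf n x - exp (-(x^2)/2)))) \<longlongrightarrow>
               indicator {0..} x *\<^sub>R (exp (\<Gamma>*x) * (exp (-(x^2)/2) - exp (-(x^2)/2)))) at_top"
          by (intro tendsto_intros hf_lim True)
        then show ?thesis by simp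
      qed (simp add: indicator_def)
    qed
    show "\<forall>\<^sub>F n in at_top. AE x in lborel. norm (indicator {0..} x *\<^sub>R (exp (\<Gamma>*x) * (hf n x - exp (-(x^2)/2)))) \<le> indicator {0..} x *\<^sub>R (C * exp (-1*x))"
      using eventually_ge_at_top[of "(4*\<Gamma>+4)^2"]
    proof eventually_elim
      case (elim n)
      show ?case
      proof (rule AE_I2)
        fix x :: real
        show "norm (indicator {0..} x *\<^sub>R (exp (\<Gamma>*x) * (hf n x - exp (-(x^2)/2)))) \<le> indicator {0..} x *\<^sub>R (C * exp (-1*x))"
        proof (cases "x \<ge> 0")
          case True
          have n0: "n > 0" using elim G by (smt (verit) zero_less_power)
          have h1: "exp (-(x^2)/2) \<le> hf n x" using hf_bounds(1)[OF n0 True] .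
          have h2: "exp (\<Gamma>*x) * hf n x \<le> C * exp (-1*x)" unfolding C_def using dom_bound[OF G elim True] .
          have d0: "0 \<le> exp (\<Gamma>*x) * (hf n x - exp (-(x^2)/2))" using h1 by simp
          have d1: "exp (\<Gamma>*x) * (hf n x - exp (-(x^2)/2)) \<le> exp (\<Gamma>*x) * hf n x"
            by (simp add: right_diff_distrib)
          have "\<bar>exp (\<Gamma>*x) * (hf n x - exp (-(x^2)/2))\<bar> \<le> C * exp (-1*x)"
            using d0 d1 h2 by linarith
          then show ?thesis using True by (simp add: indicator_def)
        qed (simp add: indicator_def)
      qed
    qed
  qed
  then show ?thesis by (simp add: set_lebesgue_integral_def)
qed



lemma alpha_formula:
  fixes lam \<beta> :: real assumes lam: "lam > 0" and b: "\<beta> \<ge> 0"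
  defines "n \<equiv> lam + \<beta> * sqrt lam"
  defines "\<rho> \<equiv> lam / n"
  defines "\<gamma> \<equiv> (n - lam) / sqrt n"
  shows "set_integrable lborel {0..} (\<lambda>u. exp (\<gamma>*u) * hf n u)"
    "alpha_tilde \<beta> lam = min 1 (inverse (\<rho> * (1 + \<gamma> * (LBINT u:{0..}. exp (\<gamma>*u) * hf n u))))"
proof -
  have nl: "n \<ge> lam" using b lam by (simp add: n_def)
  have n0: "n > 0" using nl lam by simp
  have sn: "sqrt n > 0" using n0 by simp
  define f where "f t = exp (-lam*t) * (1+t) powr n" for t
  have fint: "set_integrable lborel {0..} f" unfolding f_def using f_integrable[of lam n] lam n0 by simp
  have feq: "f ((1/sqrt n)*u) = exp (\<gamma>*u) * hf n u" for u
  proof -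
    have "-lam*((1/sqrt n)*u) = \<gamma>*u + (- sqrt n * u)"
      using sn n0 by (simp add: \<gamma>_def field_simps real_sqrt_mult[symmetric])
    then have "f ((1/sqrt n)*u) = exp (\<gamma>*u + (- sqrt n * u)) * (1 + (1/sqrt n)*u) powr n"
      unfolding f_def by simp
    also have "\<dots> = exp (\<gamma>*u) * hf n u" unfolding hf_def by (simp only: exp_add) (simp add: mult_ac)
    finally show ?thesis .
  qed
  have "set_integrable lborel {0..} (\<lambda>u. f ((1/sqrt n)*u))"
    by (rule set_integrable_scale[OF _ fint]) (use sn in simp)
  then show int: "set_integrable lborel {0..} (\<lambda>u. exp (\<gamma>*u) * hf n u)" by (simp only: feq)
  have sc: "(LBINT t:{0..}. f t) = (1/sqrt n) * (LBINT u:{0..}. exp (\<gamma>*u) * hf n u)"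
    using set_integral_scale[of "1/sqrt n" f] sn by (simp only: feq) simp
  have "lam * (LBINT t:{0..}. t * exp (- lam * t) * (1 + t) powr (n - 1))
       = lam/n + lam*(1 - lam/n) * (LBINT t:{0..}. f t)"
    unfolding f_def by (rule erlang_identity[OF lam nl])
  also have "\<dots> = \<rho> * (1 + \<gamma> * (LBINT u:{0..}. exp (\<gamma>*u) * hf n u))"
  proof -
    have "lam*(1 - lam/n) * (1/sqrt n) = \<rho> * \<gamma>"
      using sn n0 by (simp add: \<rho>_def \<gamma>_def field_simps)
    then have "lam*(1 - lam/n) * ((1/sqrt n) * K) = (\<rho>*\<gamma>)*K" for K
      by (metis mult.assoc)
    then have "lam/n + lam*(1 - lam/n) * ((1/sqrt n) * K) = \<rho> * (1 + \<gamma> * K)" for K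
      unfolding \<rho>_def by (simp add: distrib_left mult.assoc)
    then show ?thesis unfolding sc .
  qed
  finally show "alpha_tilde \<beta> lam = min 1 (inverse (\<rho> * (1 + \<gamma> * (LBINT u:{0..}. exp (\<gamma>*u) * hf n u))))"
    unfolding alpha_tilde_def erlangC_cont_def n_def by simp
qed

lemma UB_formula:
  fixes lam \<beta> :: real assumes lam: "lam > 0" and b: "\<beta> \<ge> 0"
  defines "n \<equiv> lam + \<beta> * sqrt lam"
  defines "\<rho> \<equiv> lam / n"
  defines "\<gamma> \<equiv> (n - lam) / sqrt n"
  defines "a \<equiv> sqrt (- 2 * n * (1 - \<rho> + ln \<rho>))"
  shows "UB \<beta> lam = inverse (\<rho> + \<gamma> * (Gf a + 2 / (3 * sqrt n)))" "0 \<le> \<gamma>" "\<gamma> \<le> a"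
proof -
  have nl: "n \<ge> lam" using b lam by (simp add: n_def)
  have n0: "n > 0" using nl lam by simp
  have sn: "sqrt n > 0" using n0 by simp
  have "std_Phi a / std_phi a = Gf a"
    unfolding Phi_ratio Gf_def by (simp add: std_phi_def)
  then show "UB \<beta> lam = inverse (\<rho> + \<gamma> * (Gf a + 2 / (3 * sqrt n)))"
    unfolding UB_def Let_def n_def[symmetric] \<rho>_def[symmetric] \<gamma>_def[symmetric] a_def[symmetric] by simp
  show g0: "0 \<le> \<gamma>" using nl sn by (simp add: \<gamma>_def)
  have r: "0 < \<rho>" "\<rho> \<le> 1" using lam n0 nl by (auto simp: \<rho>_def)
  have "(1-\<rho>) + (1-\<rho>)^2/2 \<le> - ln \<rho>" by (rule ln_rho[OF r])
  then have h: "(1-\<rho>) + (1-\<rho>)^2/2 + ln \<rho> \<le> 0" by linarith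
  have "n * ((1-\<rho>) + (1-\<rho>)^2/2 + ln \<rho>) \<le> 0" using n0 h by (simp add: mult_nonneg_nonpos)
  moreover have "- 2 * n * (1 - \<rho> + ln \<rho>) - n * (1-\<rho>)^2 = -2 * (n * ((1-\<rho>) + (1-\<rho>)^2/2 + ln \<rho>))"
    by (simp add: algebra_simps)
  ultimately have "n * (1-\<rho>)^2 \<le> - 2 * n * (1 - \<rho> + ln \<rho>)" by linarith
  moreover have "\<gamma>^2 = n * (1-\<rho>)^2"
    using n0 sn by (simp add: \<gamma>_def \<rho>_def power2_eq_square field_simps)
  ultimately have "\<gamma>^2 \<le> - 2 * n * (1 - \<rho> + ln \<rho>)" by simp
  then have "sqrt (\<gamma>^2) \<le> a" unfolding a_def by (rule real_sqrt_le_mono)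
  then show "\<gamma> \<le> a" using g0 by simp
qed



lemma c0_bounds: "exp (-1/2::real) \<le> 1" "1/3 \<le> exp (-1/2::real)" "0 < exp (-1/2::real)"
proof -
  show "exp (-1/2::real) \<le> 1" by simp
  show "0 < exp (-1/2::real)" by simp
  have "exp (1/2::real) \<le> exp 1" by simp
  also have "exp (1::real) \<le> 3" using exp_le by simp
  finally have "exp (1/2::real) \<le> 3" .
  then have m1: "exp (1/2::real) * exp (-1/2) \<le> 3 * exp (-1/2)" by (intro mult_right_mono) auto
  have m2: "exp (1/2::real) * exp (-1/2) = 1" by (simp add: exp_add[symmetric])
  show "1/3 \<le> exp (-1/2::real)" using m1 m2 by linarith
qed

lemma diff_integrable:
  fixes \<Gamma> n :: real assumes G: "\<Gamma> \<ge> 0" and n: "n \<ge> (4*\<Gamma>+4)^2"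
  shows "set_integrable lborel {0..} (\<lambda>u. exp (\<Gamma>*u) * (hf n u - exp (-(u^2)/2)))"
proof (rule set_integrable_bound[where f="\<lambda>u. exp ((\<Gamma>+1)*(4*\<Gamma>+4)) * exp (-1*u)"])
  show "set_integrable lborel {0..} (\<lambda>u. exp ((\<Gamma>+1)*(4*\<Gamma>+4)) * exp (-1*u))"
    using exp_minus_set_integrable[of 1 0] by simp
  show "set_borel_measurable lborel {0..} (\<lambda>u. exp (\<Gamma>*u) * (hf n u - exp (-(u^2)/2)))"
    unfolding set_borel_measurable_def using hf_meas[of n] by measurable
  show "AE x in lborel. x \<in> {0..} \<longrightarrow> norm (exp (\<Gamma>*x) * (hf n x - exp (-(x^2)/2))) \<le> norm (exp ((\<Gamma>+1)*(4*\<Gamma>+4)) * exp (-1*x))"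
  proof (rule AE_I2, rule impI)
    fix x :: real assume "x \<in> {0..}"
    then have True: "x \<ge> 0" by simp
    have n0: "n > 0" using n G by (smt (verit) zero_less_power)
    have h1: "exp (-(x^2)/2) \<le> hf n x" using hf_bounds(1)[OF n0 True] .
    have h2: "exp (\<Gamma>*x) * hf n x \<le> exp ((\<Gamma>+1)*(4*\<Gamma>+4)) * exp (-1*x)" using dom_bound[OF G n True] .
    have d0: "0 \<le> exp (\<Gamma>*x) * (hf n x - exp (-(x^2)/2))" using h1 by simp
    have d1: "exp (\<Gamma>*x) * (hf n x - exp (-(x^2)/2)) \<le> exp (\<Gamma>*x) * hf n x"
      by (simp add: right_diff_distrib)
    show "norm (exp (\<Gamma>*x) * (hf n x - exp (-(x^2)/2))) \<le> norm (exp ((\<Gamma>+1)*(4*\<Gamma>+4)) * exp (-1*x))"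
      using d0 d1 h2 abs_of_nonneg[OF d0] by (simp only: real_norm_def)
  qed
qed



lemma point_main:
  fixes lam \<beta> \<Gamma> \<epsilon> :: real assumes lam: "lam \<ge> 1" and b: "\<beta> \<ge> 0"
  defines "n \<equiv> lam + \<beta> * sqrt lam"
  shows "0 \<le> alpha_tilde \<beta> lam \<and> alpha_tilde \<beta> lam \<le> 1 \<and> 0 \<le> UB \<beta> lam \<and> UB \<beta> lam \<le> 1"
    and "\<epsilon> > 0 \<Longrightarrow> \<Gamma> = 1 / (exp (-1/2) * \<epsilon>) \<Longrightarrow> n \<ge> (4*\<Gamma>+4)^2 \<Longrightarrow>
         (LBINT u:{0..}. exp (\<Gamma>*u) * (hf n u - exp (-(u^2)/2))) \<le> \<epsilon> * (exp (-1/2))^2 / \<Gamma> \<Longrightarrow>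
         UB \<beta> lam - alpha_tilde \<beta> lam \<le> \<epsilon>"
proof -
  define c0 :: real where "c0 = exp (-1/2)"
  have c0: "c0 \<le> 1" "1/3 \<le> c0" "0 < c0" using c0_bounds by (auto simp: c0_def)
  have lam0: "lam > 0" using lam by simp
  define \<rho> where "\<rho> = lam / n"
  define \<gamma> where "\<gamma> = (n - lam) / sqrt n"
  define a where "a = sqrt (- 2 * n * (1 - \<rho> + ln \<rho>))"
  define K where "K = (LBINT u:{0..}. exp (\<gamma>*u) * hf n u)"
  have nl: "n \<ge> lam" using b lam by (simp add: n_def)
  have n1: "n \<ge> 1" using nl lam by simp
  have n0: "n > 0" using n1 by simp
  have sn: "sqrt n \<ge> 1" using n1 by simp
  have r: "0 < \<rho>" "\<rho> \<le> 1" using lam0 n0 nl by (auto simp: \<rho>_def)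
  have UBf: "UB \<beta> lam = inverse (\<rho> + \<gamma> * (Gf a + 2 / (3 * sqrt n)))" "0 \<le> \<gamma>" "\<gamma> \<le> a"
    using UB_formula[OF lam0 b] unfolding n_def \<rho>_def \<gamma>_def a_def by auto
  have Kint: "set_integrable lborel {0..} (\<lambda>u. exp (\<gamma>*u) * hf n u)"
    and alf: "alpha_tilde \<beta> lam = min 1 (inverse (\<rho> * (1 + \<gamma> * K)))"
    using alpha_formula[OF lam0 b] unfolding n_def \<rho>_def \<gamma>_def K_def by auto
  have g0: "0 \<le> \<gamma>" by (rule UBf(2))
  have rg: "1 - \<rho> = \<gamma> / sqrt n"
    using n0 by (simp add: \<rho>_def \<gamma>_def field_simps real_sqrt_mult[symmetric])
  have rg1: "\<rho> + \<gamma> \<ge> 1"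
  proof -
    have "\<gamma> / sqrt n \<le> \<gamma>" using g0 sn by (simp add: divide_le_eq mult_le_cancel_left1)
    then show ?thesis using rg by linarith
  qed
  have Gg: "c0 \<le> Gf \<gamma>" using G_ge[OF g0] by (simp add: c0_def)
  have Ga: "Gf \<gamma> \<le> Gf a" using G_mono[OF UBf(3)] .
  define P where "P = \<rho> + \<gamma> * Gf \<gamma>"
  have P: "P \<ge> c0"
  proof -
    have "\<gamma> * c0 \<le> \<gamma> * Gf \<gamma>" using Gg g0 by (intro mult_left_mono) auto
    moreover have "c0 * (\<rho> + \<gamma>) \<le> \<rho> + \<gamma> * c0" using c0 r by (simp add: algebra_simps)
    moreover have "c0 * 1 \<le> c0 * (\<rho> + \<gamma>)" using rg1 c0 by (intro mult_left_mono) auto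
    ultimately show ?thesis unfolding P_def by simp
  qed
  define D where "D = \<rho> + \<gamma> * (Gf a + 2 / (3 * sqrt n))"
  have DP: "P \<le> D"
  proof -
    have "Gf \<gamma> \<le> Gf a + 2 / (3 * sqrt n)" using Ga sn by (smt (verit) divide_nonneg_nonneg)
    then have "\<gamma> * Gf \<gamma> \<le> \<gamma> * (Gf a + 2 / (3 * sqrt n))" using g0 by (intro mult_left_mono) auto
    then show ?thesis unfolding P_def D_def by simp
  qed
  have D1: "D \<ge> 1"
  proof -
    have "1 / sqrt n \<le> 1" using sn by simp
    have m: "c0 * 3 * 1 \<le> c0 * 3 * sqrt n" by (rule mult_left_mono[OF sn]) (use c0 in simp)
    have "c0 * (sqrt n * 3) = c0 * 3 * sqrt n" by simp
    then have "1 \<le> c0 * (sqrt n * 3)" using m c0(2) by linarith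
    then have "1 / sqrt n \<le> c0 + 2 / (3 * sqrt n)" using c0 sn by (simp add: field_simps)
    also have "\<dots> \<le> Gf a + 2 / (3 * sqrt n)" using Gg Ga by simp
    finally have "\<gamma> * (1 / sqrt n) \<le> \<gamma> * (Gf a + 2 / (3 * sqrt n))" using g0 by (intro mult_left_mono) auto
    then show ?thesis unfolding D_def using rg by simp
  qed
  have UBD: "UB \<beta> lam = 1 / D" using UBf(1) unfolding D_def by (simp add: inverse_eq_divide)
  have UB01: "0 \<le> UB \<beta> lam" "UB \<beta> lam \<le> 1" using D1 UBD by auto
  have UBP: "UB \<beta> lam \<le> 1 / P" using UBD DP P c0 by (simp add: frac_le)
  have KG: "Gf \<gamma> \<le> K"
    unfolding K_def Gf_def
  proof (rule set_integral_mono[OF G_integrable Kint])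
    fix u :: real assume "u \<in> {0..}"
    then have u: "u \<ge> 0" by simp
    have "exp (\<gamma>*u - u^2/2) = exp (\<gamma>*u) * exp (-(u^2)/2)" by (simp add: exp_add[symmetric])
    also have "\<dots> \<le> exp (\<gamma>*u) * hf n u" using hf_bounds(1)[OF n0 u] by simp
    finally show "exp (\<gamma>*u - u^2/2) \<le> exp (\<gamma>*u) * hf n u" .
  qed
  have K0: "K > 0" using KG Gg c0 by simp
  define I where "I = \<rho> * (1 + \<gamma> * K)"
  have I0: "I > 0" unfolding I_def using r K0 g0 by (simp add: add_pos_nonneg)
  have alI: "alpha_tilde \<beta> lam = min 1 (inverse I)" using alf unfolding I_def .
  have "0 \<le> inverse I" using I0 by simp
  then have al01: "0 \<le> alpha_tilde \<beta> lam" "alpha_tilde \<beta> lam \<le> 1" unfolding alI by auto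
  show "0 \<le> alpha_tilde \<beta> lam \<and> alpha_tilde \<beta> lam \<le> 1 \<and> 0 \<le> UB \<beta> lam \<and> UB \<beta> lam \<le> 1"
    using al01 UB01 by auto
  assume e: "\<epsilon> > 0" and Gdef: "\<Gamma> = 1 / (exp (-1/2) * \<epsilon>)" and nG: "n \<ge> (4*\<Gamma>+4)^2"
    and Ebound: "(LBINT u:{0..}. exp (\<Gamma>*u) * (hf n u - exp (-(u^2)/2))) \<le> \<epsilon> * (exp (-1/2))^2 / \<Gamma>"
  have G0: "\<Gamma> > 0" using Gdef e c0 by (simp add: c0_def)
  show "UB \<beta> lam - alpha_tilde \<beta> lam \<le> \<epsilon>"
  proof (cases "\<gamma> \<ge> \<Gamma>")
    case True
    have "P \<ge> c0 * \<gamma>"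
    proof -
      have "\<gamma> * c0 \<le> \<gamma> * Gf \<gamma>" using Gg g0 by (intro mult_left_mono) auto
      then show ?thesis unfolding P_def using r by (simp add: mult.commute)
    qed
    moreover have "c0 * \<gamma> \<ge> c0 * \<Gamma>" using True c0 by (intro mult_left_mono) auto
    ultimately have "P \<ge> c0 * \<Gamma>" by linarith
    moreover have "c0 * \<Gamma> = 1 / \<epsilon>" using Gdef c0 e by (simp add: c0_def)
    ultimately have pe: "1 / \<epsilon> \<le> P" by linarith
    have "P > 0" using P c0 by simp
    then have "1 / P \<le> 1 / (1 / \<epsilon>)" using pe e by (intro divide_left_mono) auto
    then have "1 / P \<le> \<epsilon>" by simp
    then show ?thesis using UBP al01 by linarith
  next
    case False
    show ?thesis
    proof (cases "inverse I \<ge> 1")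
      case True
      then have "alpha_tilde \<beta> lam = 1" using alf unfolding I_def by simp
      then show ?thesis using UB01 e by linarith
    next
      case False2: False
      then have al: "alpha_tilde \<beta> lam = 1 / I" using alf unfolding I_def by (simp add: inverse_eq_divide)
      define Q where "Q = \<rho> + \<gamma> * K"
      have "\<rho> * (\<gamma> * K) \<le> 1 * (\<gamma> * K)" using r g0 K0 by (intro mult_right_mono) auto
      then have IQ: "I \<le> Q" unfolding I_def Q_def by (simp add: distrib_left)
      have QP: "P \<le> Q" unfolding P_def Q_def using KG g0 by (simp add: mult_left_mono)
      have alQ: "1 / Q \<le> alpha_tilde \<beta> lam" using al IQ I0 by (simp add: frac_le)
      have Pp: "P > 0" using P c0 by simp
      have "1 / P - 1 / Q = (Q - P) / (P * Q)" using Pp QP by (simp add: field_simps)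
      also have "Q - P = \<gamma> * (K - Gf \<gamma>)" unfolding Q_def P_def by (simp add: algebra_simps)
      finally have diff: "1 / P - 1 / Q = \<gamma> * (K - Gf \<gamma>) / (P * Q)" .
      have KGE: "K - Gf \<gamma> \<le> \<epsilon> * c0^2 / \<Gamma>"
      proof -
        have dint: "set_integrable lborel {0..} (\<lambda>u. exp (\<Gamma>*u) * (hf n u - exp (-(u^2)/2)))"
          using diff_integrable[OF _ nG] G0 by simp
        have "K - Gf \<gamma> = (LBINT u:{0..}. exp (\<gamma>*u) * hf n u - exp (\<gamma>*u - u^2/2))"
          unfolding K_def Gf_def using Kint G_integrable by (simp add: set_integral_diff)
        also have "\<dots> \<le> (LBINT u:{0..}. exp (\<Gamma>*u) * (hf n u - exp (-(u^2)/2)))"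
        proof (rule set_integral_mono)
          show "set_integrable lborel {0..} (\<lambda>u. exp (\<gamma>*u) * hf n u - exp (\<gamma>*u - u^2/2))"
            using Kint G_integrable by (rule set_integral_diff)
          show "set_integrable lborel {0..} (\<lambda>u. exp (\<Gamma>*u) * (hf n u - exp (-(u^2)/2)))" by (rule dint)
          fix u :: real assume "u \<in> {0..}"
          then have u: "u \<ge> 0" by simp
          have eq: "exp (\<gamma>*u - u^2/2) = exp (\<gamma>*u) * exp (-(u^2)/2)" by (simp add: exp_add[symmetric])
          have h: "0 \<le> hf n u - exp (-(u^2)/2)" using hf_bounds(1)[OF n0 u] by simp
          have "exp (\<gamma>*u) \<le> exp (\<Gamma>*u)" using False u by (simp add: mult_right_mono)
          then have "exp (\<gamma>*u) * (hf n u - exp (-(u^2)/2)) \<le> exp (\<Gamma>*u) * (hf n u - exp (-(u^2)/2))"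
            using h by (rule mult_right_mono)
          then show "exp (\<gamma>*u) * hf n u - exp (\<gamma>*u - u^2/2) \<le> exp (\<Gamma>*u) * (hf n u - exp (-(u^2)/2))"
            unfolding eq by (simp add: right_diff_distrib)
        qed
        also have "\<dots> \<le> \<epsilon> * c0^2 / \<Gamma>" using Ebound by (simp add: c0_def)
        finally show ?thesis .
      qed
      have KG0: "0 \<le> K - Gf \<gamma>" using KG by simp
      have "\<gamma> * (K - Gf \<gamma>) \<le> \<Gamma> * (\<epsilon> * c0^2 / \<Gamma>)"
        using False KGE KG0 g0 by (intro mult_mono) auto
      also have "\<dots> = \<epsilon> * c0^2" using G0 by simp
      finally have num: "\<gamma> * (K - Gf \<gamma>) \<le> \<epsilon> * c0^2" .
      have den: "c0 * c0 \<le> P * Q" using P QP c0 by (intro mult_mono) auto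
      then have den: "c0^2 \<le> P * Q" by (simp add: power2_eq_square)
      have "\<gamma> * (K - Gf \<gamma>) / (P * Q) \<le> \<epsilon> * c0^2 / c0^2"
        using num den c0 KG0 g0 e by (intro frac_le) auto
      then have "1 / P - 1 / Q \<le> \<epsilon>" using diff c0 by simp
      then show ?thesis using UBP alQ by linarith
    qed
  qed
qed



lemma core:
  fixes \<epsilon> :: real assumes e: "\<epsilon> > 0"
  shows "\<exists>\<Lambda>\<ge>1. \<forall>lam\<ge>\<Lambda>. \<forall>\<beta>\<ge>0. UB \<beta> lam - alpha_tilde \<beta> lam \<le> \<epsilon>"
proof -
  define \<Gamma> where "\<Gamma> = 1 / (exp (-1/2) * \<epsilon>)"
  have G0: "\<Gamma> > 0" using e by (simp add: \<Gamma>_def)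
  define \<eta> where "\<eta> = \<epsilon> * (exp (-1/2))^2 / \<Gamma>"
  have eta: "\<eta> > 0" using e G0 by (simp add: \<eta>_def)
  have "\<forall>\<^sub>F n in at_top. (LBINT u:{0..}. exp (\<Gamma>*u) * (hf n u - exp (-(u^2)/2))) < \<eta>"
    using order_tendstoD(2)[OF E_lim eta] G0 by simp
  then obtain N where N: "\<And>n. n \<ge> N \<Longrightarrow> (LBINT u:{0..}. exp (\<Gamma>*u) * (hf n u - exp (-(u^2)/2))) < \<eta>"
    unfolding eventually_at_top_linorder by blast
  define \<Lambda> where "\<Lambda> = max 1 (max N ((4*\<Gamma>+4)^2))"
  show ?thesis
  proof (intro exI[of _ \<Lambda>] conjI allI impI)
    show "1 \<le> \<Lambda>" by (simp add: \<Lambda>_def)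
    fix lam \<beta> :: real assume lam: "\<Lambda> \<le> lam" and b: "0 \<le> \<beta>"
    have l1: "lam \<ge> 1" using lam by (simp add: \<Lambda>_def)
    define n where "n = lam + \<beta> * sqrt lam"
    have "n \<ge> lam" using b l1 by (simp add: n_def)
    then have nN: "n \<ge> N" "n \<ge> (4*\<Gamma>+4)^2" using lam by (auto simp: \<Lambda>_def)
    show "UB \<beta> lam - alpha_tilde \<beta> lam \<le> \<epsilon>"
      using point_main(2)[OF l1 b e \<Gamma>_def] N[OF nN(1)] nN(2) unfolding n_def \<eta>_def by simp
  qed
qed

lemma beta0:
  fixes lam :: real assumes lam: "lam > 0"
  shows "UB 0 lam = 1" "alpha_tilde 0 lam = 1"
proof -
  show "UB 0 lam = 1" using UB_formula(1)[OF lam order_refl] lam by simp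
  show "alpha_tilde 0 lam = 1" using alpha_formula(2)[OF lam order_refl] lam by simp
qed

lemma prod_diff:
  fixes x y :: "nat \<Rightarrow> real" and e :: real
  assumes "finite A" "\<forall>i\<in>A. 0 \<le> x i \<and> x i \<le> 1 \<and> 0 \<le> y i \<and> y i \<le> 1 \<and> x i - y i \<le> e" "e \<ge> 0"
  shows "(\<Prod>i\<in>A. x i) - (\<Prod>i\<in>A. y i) \<le> real (card A) * e \<and> 0 \<le> (\<Prod>i\<in>A. y i) \<and> (\<Prod>i\<in>A. y i) \<le> 1"
  using assms
proof (induction A rule: finite_induct)
  case empty
  then show ?case by simp
next
  case (insert a A)
  then have IH: "(\<Prod>i\<in>A. x i) - (\<Prod>i\<in>A. y i) \<le> real (card A) * e" "0 \<le> (\<Prod>i\<in>A. y i)" "(\<Prod>i\<in>A. y i) \<le> 1"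
    by auto
  have xa: "0 \<le> x a" "x a \<le> 1" "0 \<le> y a" "y a \<le> 1" "x a - y a \<le> e" using insert by auto
  define D where "D = (\<Prod>i\<in>A. x i) - (\<Prod>i\<in>A. y i)"
  define Y where "Y = (\<Prod>i\<in>A. y i)"
  have "(\<Prod>i\<in>insert a A. x i) - (\<Prod>i\<in>insert a A. y i) = x a * D + (x a - y a) * Y"
    using insert by (simp add: D_def Y_def algebra_simps)
  also have "x a * D \<le> real (card A) * e"
  proof (cases "D \<ge> 0")
    case True
    then have "x a * D \<le> 1 * D" using xa by (intro mult_right_mono) auto
    then show ?thesis using IH D_def by simp
  next
    case False
    then have "x a * D \<le> 0" using xa by (simp add: mult_nonneg_nonpos)
    then show ?thesis using insert.prems(2) by (smt (verit) of_nat_0_le_iff mult_nonneg_nonneg)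
  qed
  also have "(x a - y a) * Y \<le> e"
  proof (cases "x a - y a \<ge> 0")
    case True
    then have "(x a - y a) * Y \<le> (x a - y a) * 1" using IH Y_def by (intro mult_left_mono) auto
    then show ?thesis using xa by simp
  next
    case False
    then have "(x a - y a) * Y \<le> 0" using IH Y_def by (simp add: mult_nonpos_nonneg)
    then show ?thesis using insert.prems(2) by simp
  qed
  finally have "(\<Prod>i\<in>insert a A. x i) - (\<Prod>i\<in>insert a A. y i) \<le> real (card (insert a A)) * e"
    using insert by (simp add: algebra_simps)
  moreover have "0 \<le> (\<Prod>i\<in>insert a A. y i)" "(\<Prod>i\<in>insert a A. y i) \<le> 1"
    using insert xa IH by (auto intro: mult_le_one)
  ultimately show ?case by simp
qed



theorem lemma7:
  fixes L :: nat and \<delta> :: real and lam0 :: "nat \<Rightarrow> real"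
    and c :: "nat \<Rightarrow> real \<Rightarrow> real"
  assumes "L \<ge> 1" and "\<delta> > 0"
    and "\<forall>i<L. lam0 i > 0"
    and "\<forall>i<L. continuous_on {0..} (c i)"
    and "\<forall>i<L. strict_mono_on {0..} (c i)"
  shows "(\<lambda>m::nat. SUP \<beta>\<in>{\<beta>::nat \<Rightarrow> real. \<forall>i<L. \<beta> i \<ge> 0}.
            ereal (((\<Sum>i<L. c i (\<beta> i))
                     + \<delta> * (1 - (\<Prod>i<L. 1 - UB (\<beta> i) (real m * lam0 i))))
                 - ((\<Sum>i<L. c i (\<beta> i))
                     + \<delta> * (1 - (\<Prod>i<L. 1 - alpha_tilde (\<beta> i) (real m * lam0 i))))))
         \<longlonglongrightarrow> 0"
proof -
  note L = assms(1) and dl = assms(2) and l0 = assms(3)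
  define B where "B = {\<beta>::nat \<Rightarrow> real. \<forall>i<L. \<beta> i \<ge> 0}"
  define d where "d m \<beta> = \<delta> * ((\<Prod>i<L. 1 - alpha_tilde (\<beta> i) (real m * lam0 i))
                           - (\<Prod>i<L. 1 - UB (\<beta> i) (real m * lam0 i)))" for m :: nat and \<beta>
  have eqd: "((\<Sum>i<L. c i (\<beta> i)) + \<delta> * (1 - (\<Prod>i<L. 1 - UB (\<beta> i) (real m * lam0 i))))
                 - ((\<Sum>i<L. c i (\<beta> i)) + \<delta> * (1 - (\<Prod>i<L. 1 - alpha_tilde (\<beta> i) (real m * lam0 i))))
           = d m \<beta>" for m \<beta>
    unfolding d_def by (simp add: algebra_simps)
  define S where "S m = (SUP \<beta>\<in>B. ereal (d m \<beta>))" for m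
  have "S \<longlonglongrightarrow> 0"
  proof (rule order_tendstoI)
    fix a :: ereal assume a: "a < 0"
    have "\<forall>\<^sub>F m in sequentially. ereal 0 \<le> S m"
      using eventually_ge_at_top[of "1::nat"]
    proof eventually_elim
      case (elim m)
      have z: "(\<lambda>_. 0) \<in> B" by (simp add: B_def)
      have "\<forall>i<L. real m * lam0 i > 0" using elim l0 by simp
      then have "d m (\<lambda>_. 0) = 0" using L unfolding d_def by (simp add: beta0)
      then have "ereal (d m (\<lambda>_. 0)) = ereal 0" by simp
      moreover have "ereal (d m (\<lambda>_. 0)) \<le> S m" unfolding S_def by (rule SUP_upper[OF z])
      ultimately show ?case by simp
    qed
    then show "\<forall>\<^sub>F m in sequentially. a < S m"
      by eventually_elim (use a in \<open>metis zero_ereal_def less_le_trans\<close>)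
  next
    fix a :: ereal assume a: "0 < a"
    obtain r where r: "0 < r" "ereal r < a"
    proof (cases a)
      case (real x)
      then show ?thesis using a that[of "x/2"] by auto
    next
      case PInf
      then show ?thesis using that[of 1] by auto
    qed (use a in auto)
    define e where "e = r / (2 * \<delta> * L)"
    have e: "e > 0" using r dl L by (simp add: e_def)
    obtain \<Lambda> where \<Lambda>: "\<Lambda> \<ge> 1" "\<And>lam \<beta>. lam \<ge> \<Lambda> \<Longrightarrow> \<beta> \<ge> 0 \<Longrightarrow> UB \<beta> lam - alpha_tilde \<beta> lam \<le> e"
      using core[OF e] by blast
    have ev: "\<forall>\<^sub>F m in sequentially. \<forall>i\<in>{..<L}. real m * lam0 i \<ge> \<Lambda>"
    proof (rule eventually_ball_finite)
      show "\<forall>i\<in>{..<L}. \<forall>\<^sub>F m in sequentially. real m * lam0 i \<ge> \<Lambda>"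
      proof
        fix i assume "i \<in> {..<L}"
        then have li: "lam0 i > 0" using l0 by simp
        show "\<forall>\<^sub>F m in sequentially. real m * lam0 i \<ge> \<Lambda>"
          using eventually_ge_at_top[of "nat \<lceil>\<Lambda> / lam0 i\<rceil>"]
        proof eventually_elim
          case (elim m)
          then have "real m \<ge> \<Lambda> / lam0 i" by linarith
          then show ?case using li by (simp add: pos_divide_le_eq)
        qed
      qed
    qed simp
    have "\<forall>\<^sub>F m in sequentially. S m \<le> ereal (r/2)"
      using ev
    proof eventually_elim
      case (elim m)
      show ?case unfolding S_def
      proof (rule SUP_least)
        fix \<beta> assume "\<beta> \<in> B"
        then have b: "\<forall>i<L. \<beta> i \<ge> 0" by (simp add: B_def)
        have pts: "\<forall>i\<in>{..<L}. 0 \<le> 1 - alpha_tilde (\<beta> i) (real m * lam0 i) \<and> 1 - alpha_tilde (\<beta> i) (real m * lam0 i) \<le> 1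
            \<and> 0 \<le> 1 - UB (\<beta> i) (real m * lam0 i) \<and> 1 - UB (\<beta> i) (real m * lam0 i) \<le> 1
            \<and> (1 - alpha_tilde (\<beta> i) (real m * lam0 i)) - (1 - UB (\<beta> i) (real m * lam0 i)) \<le> e"
        proof
          fix i assume i: "i \<in> {..<L}"
          have lm: "real m * lam0 i \<ge> \<Lambda>" using elim i by simp
          have l1: "real m * lam0 i \<ge> 1" using lm \<Lambda>(1) by simp
          have bi: "\<beta> i \<ge> 0" using b i by simp
          show "0 \<le> 1 - alpha_tilde (\<beta> i) (real m * lam0 i) \<and> 1 - alpha_tilde (\<beta> i) (real m * lam0 i) \<le> 1
            \<and> 0 \<le> 1 - UB (\<beta> i) (real m * lam0 i) \<and> 1 - UB (\<beta> i) (real m * lam0 i) \<le> 1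
            \<and> (1 - alpha_tilde (\<beta> i) (real m * lam0 i)) - (1 - UB (\<beta> i) (real m * lam0 i)) \<le> e"
            using point_main(1)[OF l1 bi] \<Lambda>(2)[OF lm bi] by auto
        qed
        have "d m \<beta> \<le> \<delta> * (real (card {..<L}) * e)"
          unfolding d_def using prod_diff[OF _ pts] e dl by (intro mult_left_mono) auto
        also have "\<delta> * (real (card {..<L}) * e) = r/2" using dl L by (simp add: e_def)
        finally show "ereal (d m \<beta>) \<le> ereal (r/2)" by simp
      qed
    qed
    then show "\<forall>\<^sub>F m in sequentially. S m < a"
    proof eventually_elim
      case (elim m)
      have "ereal (r/2) < ereal r" using r by simp
      then show ?case using elim r by (meson le_less_trans less_trans)
    qed
  qed
  then show ?thesis unfolding S_def B_def eqd .
qed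


end
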